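(* Let $\{(A_k,f_k)\}_{k=0}^n$ be a chain of one-dimensional double extensions by $\{(b_{k+1},d_k)\}_{k=0}^{n-1}$ satisfying (NNP) and (2SP). Then $n\geq 3$ and: (a) $(A_n,f_n)$ is a $2n$-dimensional $2$-step nilpotent quadratic Lie algebra with $A_{n,2}\subseteq Z(A_n)$, $[b_i,b_j]_n=\sum_{k=1}^n D_{ijk}\,b_k^*$, $[b_i^*,\cdot\,]_n=0$, and $f_n(b_i,b_j^* )=\delta_{ij}$, $f_n(b_i,b_j)=f_n(b_i^*,b_j^* )=0$; (b) $(A_n,f_n)$ is reduced if and only if $A_{n,2}=\mathrm{span}\langle \sum_{k=1}^n \hat w_k(b_i,b_j): 1\leq j<i\leq n\rangle$, where $\hat w_k(b_i,b_j):=D_{ijk}\,b_k^*$.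
   Context: Work over a field $\mathbb{K}$ of characteristic zero. A quadratic Lie algebra $(A,f)$ is a Lie algebra with a non-degenerate symmetric bilinear form $f$ with $f([x,y],z)+f(y,[x,z])=0$. For an $f$-skew-symmetric derivation $d$ of $A$ (i.e. $f(d(x),y)+f(x,d(y))=0$), the one-dimensional double extension of $(A,f)$ by $(b,d)$ is $\mathbb{K}b\oplus A\oplus\mathbb{K}b^*$ with bracket $[\lambda b+a+\mu b^*,\lambda' b+a'+\mu' b^*]=\lambda d(a')-\lambda' d(a)+[a,a']_A+f(d(a),a')b^*$ and form $(\lambda b+a+\mu b^*,\lambda' b+a'+\mu' b^* )\mapsto\lambda\mu'+\lambda'\mu+f(a,a')$. A chain of one-dimensional double extensions $\{(A_k,f_k)\}_{k=0}^n$ by $\{(b_{k+1},d_k)\}_{k=0}^{n-1}$ is defined by $A_0=\{0\}$, $f_0=0$, and for $0\le k\le n-1$, $d_k$ an $f_k$-skew-symmetric derivation of $A_k$ and $(A_{k+1},f_{k+1})$ the one-dimensional double extension of $(A_k,f_k)$ by $(b_{k+1},d_k)$, $A_{k+1}=\mathbb{K}b_{k+1}\oplus A_k\oplus\mathbb{K}b_{k+1}^*$. Thus $A_k$ has basis $b_k,\dots,b_1,b_1^*,\dots,b_k^*$; set $A_{k,1}=\mathrm{span}\langle b_1,\dots,b_k\rangle$, $A_{k,2}=\mathrm{span}\langle b_1^*,\dots,b_k^*\rangle$. The chain satisfies (NNP) if $d_k\neq0$ for some $k$, and (2SP) if $\mathrm{im}\,d_k\subseteq A_{k,2}\subseteq\ker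 d_k$ for every $k\ge1$. For indices $i,j,k\in\{1,\dots,n\}$, $D_{ijk}:=\mathrm{sgn}(\sigma)f_{\sigma(k)-1}(d_{\sigma(k)-1}(b_{\sigma(i)}),b_{\sigma(j)})$ where $\sigma$ is the permutation of $\{i,j,k\}$ with $\sigma(i)<\sigma(j)<\sigma(k)$, and $D_{ijk}=0$ if two indices coincide. A quadratic Lie algebra $L$ is reduced if $Z(L)\subseteq [L,L]$; $2$-step nilpotent means $[L,[L,L]]=0\ne[L,L]$. *)

theory Defs
  imports Main "HOL-Library.Function_Algebras"
begin

text \<open>Coordinates: an element of A_k is a function on basis indices.
  B i stands for b_i, S i stands for b_i^* (i >= 1).\<close>
datatype bidx = B nat | S nat

type_synonym 'a elt = "bidx \<Rightarrow> 'a"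

definition scal :: "'a::field \<Rightarrow> 'a elt \<Rightarrow> 'a elt" where
  "scal c x = (\<lambda>i. c * x i)"

definition bvec :: "bidx \<Rightarrow> 'a::field elt" where
  "bvec j = (\<lambda>i. if i = j then 1 else 0)"

definition inA :: "nat \<Rightarrow> 'a::field elt \<Rightarrow> bool" where
  "inA k x \<longleftrightarrow> (\<forall>m. (m = 0 \<or> k < m) \<longrightarrow> x (B m) = 0 \<and> x (S m) = 0)"

definition inA2 :: "nat \<Rightarrow> 'a::field elt \<Rightarrow> bool" where
  "inA2 k x \<longleftrightarrow> inA k x \<and> (\<forall>m. x (B m) = 0)"

definition restr :: "nat \<Rightarrow> 'a::field elt \<Rightarrow> 'a elt" where
  "restr k x = (\<lambda>i. case i of B m \<Rightarrow> if 1 \<le> m \<and> m \<le> k then x i else 0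
                           | S m \<Rightarrow> if 1 \<le> m \<and> m \<le> k then x i else 0)"

fun fk :: "nat \<Rightarrow> 'a::field elt \<Rightarrow> 'a elt \<Rightarrow> 'a" where
  "fk 0 x y = 0"
| "fk (Suc k) x y = x (B (Suc k)) * y (S (Suc k)) + y (B (Suc k)) * x (S (Suc k))
      + fk k (restr k x) (restr k y)"

text \<open>The bracket of A_k, determined by the derivations d_0, ..., d_{k-1}
  (A_0 = 0; A_{k+1} is the double extension of A_k by (b_{k+1}, d_k)).\<close>
fun brk :: "(nat \<Rightarrow> 'a::field elt \<Rightarrow> 'a elt) \<Rightarrow> nat \<Rightarrow> 'a elt \<Rightarrow> 'a elt \<Rightarrow> 'a elt" where
  "brk d 0 x y = 0"
| "brk d (Suc k) x y =
     scal (x (B (Suc k))) (d k (restr k y)) - scal (y (B (Suc k))) (d k (restr k x))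
     + brk d k (restr k x) (restr k y)
     + scal (fk k (d k (restr k x)) (restr k y)) (bvec (S (Suc k)))"

definition lspan :: "'a::field elt set \<Rightarrow> 'a elt set" where
  "lspan W = {v. \<exists>F c. finite F \<and> F \<subseteq> W \<and> v = (\<Sum>u\<in>F. scal (c u) u)}"

definition lin_indep :: "'a::field elt set \<Rightarrow> bool" where
  "lin_indep W \<longleftrightarrow> (\<forall>F c. finite F \<and> F \<subseteq> W \<and> (\<Sum>u\<in>F. scal (c u) u) = 0 \<longrightarrow> (\<forall>u\<in>F. c u = 0))"

definition lie_algebra_on :: "'a::field elt set \<Rightarrow> ('a elt \<Rightarrow> 'a elt \<Rightarrow> 'a elt) \<Rightarrow> bool" where
  "lie_algebra_on V br \<longleftrightarrow>
     0 \<in> V \<and> (\<forall>x\<in>V. \<forall>y\<in>V. x + y \<in> V) \<and> (\<forall>c. \<forall>x\<in>V. scal c x \<in> V)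
   \<and> (\<forall>x\<in>V. \<forall>y\<in>V. br x y \<in> V)
   \<and> (\<forall>x\<in>V. \<forall>y\<in>V. \<forall>z\<in>V. br (x + y) z = br x z + br y z)
   \<and> (\<forall>c. \<forall>x\<in>V. \<forall>y\<in>V. br (scal c x) y = scal c (br x y))
   \<and> (\<forall>x\<in>V. br x x = 0)
   \<and> (\<forall>x\<in>V. \<forall>y\<in>V. \<forall>z\<in>V. br x (br y z) + br y (br z x) + br z (br x y) = 0)"

definition quadratic_lie_algebra_on ::
  "'a::field elt set \<Rightarrow> ('a elt \<Rightarrow> 'a elt \<Rightarrow> 'a elt) \<Rightarrow> ('a elt \<Rightarrow> 'a elt \<Rightarrow> 'a) \<Rightarrow> bool" where
  "quadratic_lie_algebra_on V br f \<longleftrightarrow>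
     lie_algebra_on V br
   \<and> (\<forall>x\<in>V. \<forall>y\<in>V. \<forall>z\<in>V. f (x + y) z = f x z + f y z)
   \<and> (\<forall>c. \<forall>x\<in>V. \<forall>y\<in>V. f (scal c x) y = c * f x y)
   \<and> (\<forall>x\<in>V. \<forall>y\<in>V. f x y = f y x)
   \<and> (\<forall>x\<in>V. (\<forall>y\<in>V. f x y = 0) \<longrightarrow> x = 0)
   \<and> (\<forall>x\<in>V. \<forall>y\<in>V. \<forall>z\<in>V. f (br x y) z + f y (br x z) = 0)"

text \<open>D_{ijk}: sign of the sorting permutation times f_{r-1}(d_{r-1}(b_p), b_q),
  where p<q<r is the increasing rearrangement of i,j,k.\<close>
definition Dc :: "(nat \<Rightarrow> 'a::field elt \<Rightarrow> 'a elt) \<Rightarrow> nat \<Rightarrow> nat \<Rightarrow> nat \<Rightarrow> 'a" where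
  "Dc d i j k =
    (if i = j \<or> j = k \<or> i = k then 0
     else (let p = min i (min j k); r = max i (max j k); q = i + j + k - p - r;
               inv = (if j < i then 1 else 0) + (if k < i then 1 else 0) + (if k < j then 1 else 0) :: nat
           in (-1) ^ inv * fk (r - 1) (d (r - 1) (bvec (B p))) (bvec (B q))))"

end

theory Submission
  imports Defs
begin


lemma sum_fun_apply: "(\<Sum>u\<in>F. g u) x = (\<Sum>u\<in>F. g u x)"
  by (induction F rule: infinite_finite_induct) auto

lemma scal_apply[simp]: "scal c x i = c * x i" by (simp add: scal_def)
lemma bvec_apply: "bvec j i = (if i = j then 1 else 0)" by (simp add: bvec_def)
lemma bvec_BB[simp]: "bvec (B m) (B l) = (if l = m then 1 else 0)" by (simp add: bvec_def)
lemma bvec_BS[simp]: "bvec (B m) (S l) = 0" by (simp add: bvec_def)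
lemma bvec_SB[simp]: "bvec (S m) (B l) = 0" by (simp add: bvec_def)
lemma bvec_SS[simp]: "bvec (S m) (S l) = (if l = m then 1 else 0)" by (simp add: bvec_def)

lemma restr_B[simp]: "restr k x (B m) = (if 1 \<le> m \<and> m \<le> k then x (B m) else 0)"
  by (simp add: restr_def)
lemma restr_S[simp]: "restr k x (S m) = (if 1 \<le> m \<and> m \<le> k then x (S m) else 0)"
  by (simp add: restr_def)

lemma inA_restr[simp]: "inA k (restr k x)" by (simp add: inA_def)

lemma restr_id: "inA k x \<Longrightarrow> restr k x = x"
  unfolding inA_def
  apply (rule ext)
  subgoal for i by (cases i) (auto simp: not_le)
  done

lemma restr_add[simp]: "restr k (x + y) = restr k x + restr k y"
  by (rule ext) (simp add: restr_def split: bidx.split)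
lemma restr_diff[simp]: "restr k (x - y) = restr k x - restr k y"
  by (rule ext) (simp add: restr_def split: bidx.split)
lemma restr_scal[simp]: "restr k (scal c x) = scal c (restr k x)"
  by (rule ext) (simp add: restr_def scal_def split: bidx.split)
lemma restr_zero[simp]: "restr k 0 = 0"
  by (rule ext) (simp add: restr_def split: bidx.split)
lemma restr_bvecB[simp]: "restr k (bvec (B m)) = (if 1 \<le> m \<and> m \<le> k then bvec (B m) else 0)"
  by (rule ext) (auto simp add: restr_def bvec_def split: bidx.split)
lemma restr_bvecS[simp]: "restr k (bvec (S m)) = (if 1 \<le> m \<and> m \<le> k then bvec (S m) else 0)"
  by (rule ext) (auto simp add: restr_def bvec_def split: bidx.split)

lemma inA_0[simp]: "inA k 0" by (simp add: inA_def)
lemma inA_add: "inA k x \<Longrightarrow> inA k y \<Longrightarrow> inA k (x + y)" by (simp add: inA_def)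
lemma inA_diff: "inA k x \<Longrightarrow> inA k y \<Longrightarrow> inA k (x - y)" by (simp add: inA_def)
lemma inA_scal: "inA k x \<Longrightarrow> inA k (scal c x)" by (simp add: inA_def)
lemma inA_mono: "inA k x \<Longrightarrow> k \<le> k' \<Longrightarrow> inA k' x" by (auto simp add: inA_def)
lemma inA_bvecB: "1 \<le> m \<Longrightarrow> m \<le> k \<Longrightarrow> inA k (bvec (B m))" by (auto simp add: inA_def)
lemma inA_bvecS: "1 \<le> m \<Longrightarrow> m \<le> k \<Longrightarrow> inA k (bvec (S m))" by (auto simp add: inA_def)
lemma inA_0_zero: "inA 0 x \<Longrightarrow> x = 0"
  unfolding inA_def
  apply (rule ext)
  subgoal for i by (cases i) auto
  done

lemma inA2_0[simp]: "inA2 k 0" by (simp add: inA2_def)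
lemma inA2_add: "inA2 k x \<Longrightarrow> inA2 k y \<Longrightarrow> inA2 k (x + y)" by (simp add: inA2_def inA_add)
lemma inA2_diff: "inA2 k x \<Longrightarrow> inA2 k y \<Longrightarrow> inA2 k (x - y)" by (simp add: inA2_def inA_diff)
lemma inA2_scal: "inA2 k x \<Longrightarrow> inA2 k (scal c x)" by (simp add: inA2_def inA_scal)
lemma inA2_mono: "inA2 k x \<Longrightarrow> k \<le> k' \<Longrightarrow> inA2 k' x" by (auto simp add: inA2_def inA_mono)
lemma inA2_bvecS: "1 \<le> m \<Longrightarrow> m \<le> k \<Longrightarrow> inA2 k (bvec (S m))" by (auto simp add: inA2_def inA_bvecS)
lemma inA2_restr: "inA2 k (restr k x) \<longleftrightarrow> (\<forall>m. 1 \<le> m \<and> m \<le> k \<longrightarrow> x (B m) = 0)"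
  by (auto simp add: inA2_def)

lemma fk_closed: "fk k x y = (\<Sum>m\<in>{1..k}. x (B m) * y (S m) + y (B m) * x (S m))"
proof (induction k arbitrary: x y)
  case 0 then show ?case by simp
next
  case (Suc k)
  have "(\<Sum>m\<in>{1..k}. restr k x (B m) * restr k y (S m) + restr k y (B m) * restr k x (S m))
       = (\<Sum>m\<in>{1..k}. x (B m) * y (S m) + y (B m) * x (S m))"
    by (rule sum.cong) auto
  moreover have "{1..Suc k} = insert (Suc k) {1..k}" by auto
  ultimately show ?case using Suc by (simp add: add.commute)
qed

lemma fk_add1: "fk k (x + y) z = fk k x z + fk k y z"
  by (simp add: fk_closed sum.distrib algebra_simps)
lemma fk_add2: "fk k z (x + y) = fk k z x + fk k z y"
  by (simp add: fk_closed sum.distrib algebra_simps)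
lemma fk_diff1: "fk k (x - y) z = fk k x z - fk k y z"
  by (simp add: fk_closed sum_subtractf algebra_simps)
lemma fk_diff2: "fk k z (x - y) = fk k z x - fk k z y"
  by (simp add: fk_closed sum_subtractf algebra_simps)
lemma fk_scal1: "fk k (scal c x) y = c * fk k x y"
  by (simp add: fk_closed sum_distrib_left algebra_simps)
lemma fk_scal2: "fk k y (scal c x) = c * fk k y x"
  by (simp add: fk_closed sum_distrib_left algebra_simps)
lemma fk_sym: "fk k x y = fk k y x"
  by (simp add: fk_closed algebra_simps)
lemma fk_zero1[simp]: "fk k 0 y = 0" by (simp add: fk_closed)
lemma fk_zero2[simp]: "fk k y 0 = 0" by (simp add: fk_closed)
lemma fk_restr1[simp]: "fk k (restr k x) y = fk k x y"
  by (simp add: fk_closed)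
lemma fk_restr2[simp]: "fk k y (restr k x) = fk k y x"
  by (simp add: fk_closed)
lemma fk_A2: "inA2 k x \<Longrightarrow> inA2 k y \<Longrightarrow> fk k x y = 0"
  by (simp add: fk_closed inA2_def)
lemma fk_bvecB: "fk k w (bvec (B l)) = w (S l)" if "1 \<le> l" "l \<le> k"
proof -
  have "fk k w (bvec (B l)) = (\<Sum>m\<in>{1..k}. if m = l then w (S m) else 0)"
    unfolding fk_closed by (rule sum.cong) auto
  then show ?thesis using that by simp
qed
lemma fk_bvecS: "fk k w (bvec (S l)) = w (B l)" if "1 \<le> l" "l \<le> k"
proof -
  have "fk k w (bvec (S l)) = (\<Sum>m\<in>{1..k}. if m = l then w (B m) else 0)"
    unfolding fk_closed by (rule sum.cong) auto
  then show ?thesis using that by simp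
qed



lemma scal_0_left[simp]: "scal 0 v = 0" by (rule ext) simp
lemma scal_0_right[simp]: "scal c 0 = 0" by (rule ext) simp
lemma scal_1[simp]: "scal 1 v = v" by (rule ext) simp
lemma restr_restr[simp]: "k \<le> m \<Longrightarrow> restr k (restr m x) = restr k x"
  by (rule ext) (simp add: restr_def split: bidx.split)

lemma grp_aux: "e = a + b + (c + f) \<Longrightarrow> e = 0 \<Longrightarrow> a = 0 \<Longrightarrow> f = 0 \<Longrightarrow> c = - (b::'b::ab_group_add)"
  by (simp add: eq_neg_iff_add_eq_0 add.commute)

locale chain =
  fixes d :: "nat \<Rightarrow> 'a::field_char_0 elt \<Rightarrow> 'a elt" and n :: nat
  assumes maps: "\<And>k x. k < n \<Longrightarrow> inA k x \<Longrightarrow> inA k (d k x)"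
    and lin_add: "\<And>k x y. k < n \<Longrightarrow> inA k x \<Longrightarrow> inA k y \<Longrightarrow> d k (x + y) = d k x + d k y"
    and lin_scal: "\<And>k c x. k < n \<Longrightarrow> inA k x \<Longrightarrow> d k (scal c x) = scal c (d k x)"
    and deriv: "\<And>k x y. k < n \<Longrightarrow> inA k x \<Longrightarrow> inA k y \<Longrightarrow>
                   d k (brk d k x y) = brk d k (d k x) y + brk d k x (d k y)"
    and skew: "\<And>k x y. k < n \<Longrightarrow> inA k x \<Longrightarrow> inA k y \<Longrightarrow>
                   fk k (d k x) y + fk k x (d k y) = 0"
    and NNP: "\<exists>k<n. \<exists>x. inA k x \<and> d k x \<noteq> 0"
    and SP2_im: "\<And>k x. 1 \<le> k \<Longrightarrow> k < n \<Longrightarrow> inA k x \<Longrightarrow> inA2 k (d k x)"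
    and SP2_ker: "\<And>k x. 1 \<le> k \<Longrightarrow> k < n \<Longrightarrow> inA2 k x \<Longrightarrow> d k x = 0"
begin

lemma n_pos: "0 < n" using NNP by auto

lemma d_zero[simp]: "k < n \<Longrightarrow> d k 0 = 0"
  using lin_scal[of k 0 0] by simp

lemma d_A2: "k < n \<Longrightarrow> inA k x \<Longrightarrow> inA2 k (d k x)"
proof (cases k)
  case 0
  assume "k < n" "inA k x"
  then have "x = 0" using 0 inA_0_zero by blast
  then show ?thesis using \<open>k < n\<close> by simp
next
  case (Suc m)
  assume "k < n" "inA k x"
  then show ?thesis using SP2_im Suc by simp
qed

lemma d_inA: "k < n \<Longrightarrow> inA k x \<Longrightarrow> inA k (d k x)"
  using d_A2 inA2_def by blast

lemma d_ker: "k < n \<Longrightarrow> inA2 k x \<Longrightarrow> d k x = 0"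
proof (cases k)
  case 0
  assume "k < n" "inA2 k x"
  then have "x = 0" using 0 inA_0_zero inA2_def by blast
  then show ?thesis using \<open>k < n\<close> by simp
next
  case (Suc m)
  assume "k < n" "inA2 k x"
  then show ?thesis using SP2_ker Suc by simp
qed

lemma d_diff: "k < n \<Longrightarrow> inA k x \<Longrightarrow> inA k y \<Longrightarrow> d k (x - y) = d k x - d k y"
proof -
  assume a: "k < n" "inA k x" "inA k y"
  have e1: "x - y = x + scal (-1) y" by (rule ext) simp
  have e2: "d k x - d k y = d k x + scal (-1) (d k y)" by (rule ext) simp
  have "d k (x - y) = d k (x + scal (-1) y)" by (simp only: e1)
  also have "\<dots> = d k x + scal (-1) (d k y)"
    by (simp only: lin_add[OF a(1) a(2) inA_scal[OF a(3)]] lin_scal[OF a(1) a(3)])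
  also have "\<dots> = d k x - d k y" by (simp only: e2)
  finally show ?thesis .
qed

lemma skew_self: "k < n \<Longrightarrow> inA k x \<Longrightarrow> fk k (d k x) x = 0"
  using skew[of k x x] fk_sym[of k x "d k x"] by simp

lemma skew_anti: "k < n \<Longrightarrow> inA k x \<Longrightarrow> inA k y \<Longrightarrow> fk k (d k x) y = - fk k (d k y) x"
  using skew[of k x y] fk_sym[of k x "d k y"] by (simp add: eq_neg_iff_add_eq_0)

lemma brk_A2: "k \<le> n \<Longrightarrow> inA2 k (brk d k x y)"
proof (induction k arbitrary: x y)
  case 0 then show ?case by (simp add: inA2_def inA_def)
next
  case (Suc k)
  have k: "k < n" using Suc by simp
  have 1: "inA2 (Suc k) (d k (restr k y))" "inA2 (Suc k) (d k (restr k x))"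
    using inA2_mono[OF d_A2[OF k inA_restr]] by auto
  have 2: "inA2 (Suc k) (brk d k (restr k x) (restr k y))"
    by (rule inA2_mono[OF Suc.IH]) (use Suc.prems in auto)
  have 3: "inA2 (Suc k) (bvec (S (Suc k)))" by (rule inA2_bvecS) auto
  show ?case unfolding brk.simps by (intro inA2_add inA2_diff inA2_scal 1 2 3)
qed

lemma brk_inA: "k \<le> n \<Longrightarrow> inA k (brk d k x y)"
  using brk_A2 inA2_def by blast

lemma brk_B[simp]: "k \<le> n \<Longrightarrow> brk d k x y (B m) = 0"
  using brk_A2 inA2_def by blast

lemma brk_central: "k \<le> n \<Longrightarrow> (\<forall>m. 1 \<le> m \<and> m \<le> k \<longrightarrow> z (B m) = 0) \<Longrightarrow>
   brk d k z y = 0 \<and> brk d k y z = 0"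
proof (induction k arbitrary: y z)
  case 0 then show ?case by simp
next
  case (Suc k)
  have k: "k < n" using Suc by simp
  have zB: "z (B (Suc k)) = 0" using Suc.prems by simp
  have rz: "inA2 k (restr k z)" using Suc.prems by (simp add: inA2_restr)
  have dz: "d k (restr k z) = 0" using d_ker[OF k rz] .
  have ih: "brk d k (restr k z) (restr k y) = 0 \<and> brk d k (restr k y) (restr k z) = 0"
    by (rule Suc.IH) (use Suc.prems in auto)
  have f: "fk k (d k (restr k y)) (restr k z) = 0"
    using fk_A2[OF d_A2[OF k inA_restr] rz] .
  have "brk d (Suc k) z y = 0 - 0 + 0 + 0"
    by (simp only: brk.simps zB dz ih fk_zero1 scal_0_left scal_0_right)
  moreover have "brk d (Suc k) y z = 0 - 0 + 0 + 0"
    by (simp only: brk.simps zB dz ih f fk_zero1 scal_0_left scal_0_right)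
  ultimately show ?case by simp
qed

lemma brk_zero1[simp]: "k \<le> n \<Longrightarrow> brk d k 0 y = 0"
  using brk_central[of k 0 y] by simp
lemma brk_zero2[simp]: "k \<le> n \<Longrightarrow> brk d k y 0 = 0"
  using brk_central[of k 0 y] by simp

lemma brk_A2_arg: "k \<le> n \<Longrightarrow> inA2 k z \<Longrightarrow> brk d k z y = 0 \<and> brk d k y z = 0"
  by (rule brk_central) (auto simp: inA2_def)

lemma brk_add1: "k \<le> n \<Longrightarrow> brk d k (x + y) z = brk d k x z + brk d k y z"
proof (induction k arbitrary: x y z)
  case 0 then show ?case by simp
next
  case (Suc k)
  have k: "k < n" using Suc by simp
  have ih: "brk d k (restr k x + restr k y) (restr k z) = brk d k (restr k x) (restr k z) + brk d k (restr k y) (restr k z)"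
    by (rule Suc.IH) (use Suc.prems in auto)
  show ?case
    apply (simp only: brk.simps restr_add lin_add[OF k inA_restr inA_restr] fk_add1 ih)
    apply (rule ext) apply (simp add: algebra_simps)
    done
qed

lemma brk_add2: "k \<le> n \<Longrightarrow> brk d k z (x + y) = brk d k z x + brk d k z y"
proof (induction k arbitrary: x y z)
  case 0 then show ?case by simp
next
  case (Suc k)
  have k: "k < n" using Suc by simp
  have ih: "brk d k (restr k z) (restr k x + restr k y) = brk d k (restr k z) (restr k x) + brk d k (restr k z) (restr k y)"
    by (rule Suc.IH) (use Suc.prems in auto)
  show ?case
    apply (simp only: brk.simps restr_add lin_add[OF k inA_restr inA_restr] fk_add2 ih)
    apply (rule ext) apply (simp add: algebra_simps)
    done
qed

lemma brk_scal1: "k \<le> n \<Longrightarrow> brk d k (scal c x) z = scal c (brk d k x z)"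
proof (induction k arbitrary: x z)
  case 0 then show ?case by simp
next
  case (Suc k)
  have k: "k < n" using Suc by simp
  have ih: "brk d k (scal c (restr k x)) (restr k z) = scal c (brk d k (restr k x) (restr k z))"
    by (rule Suc.IH) (use Suc.prems in auto)
  show ?case
    apply (simp only: brk.simps restr_scal lin_scal[OF k inA_restr] fk_scal1 ih)
    apply (rule ext) apply (simp add: algebra_simps)
    done
qed

lemma brk_scal2: "k \<le> n \<Longrightarrow> brk d k z (scal c x) = scal c (brk d k z x)"
proof (induction k arbitrary: x z)
  case 0 then show ?case by simp
next
  case (Suc k)
  have k: "k < n" using Suc by simp
  have ih: "brk d k (restr k z) (scal c (restr k x)) = scal c (brk d k (restr k z) (restr k x))"
    by (rule Suc.IH) (use Suc.prems in auto)
  show ?case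
    apply (simp only: brk.simps restr_scal lin_scal[OF k inA_restr] fk_scal2 ih)
    apply (rule ext) apply (simp add: algebra_simps)
    done
qed

lemma brk_alt: "k \<le> n \<Longrightarrow> brk d k x x = 0"
proof (induction k arbitrary: x)
  case 0 then show ?case by simp
next
  case (Suc k)
  have k: "k < n" using Suc by simp
  show ?case using Suc skew_self[OF k inA_restr] by simp
qed

lemma brk_anti: "k \<le> n \<Longrightarrow> brk d k x y = - brk d k y x"
proof -
  assume k: "k \<le> n"
  have e: "brk d k (x + y) (x + y) = brk d k x x + brk d k y x + (brk d k x y + brk d k y y)"
    by (simp only: brk_add1[OF k] brk_add2[OF k])
  show ?thesis by (rule grp_aux[OF e brk_alt[OF k] brk_alt[OF k] brk_alt[OF k]])
qed

end


context chain
begin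

lemma brk_Suc_restr:
  assumes k: "k < n"
  shows "restr k (brk d (Suc k) x y) = scal (x (B (Suc k))) (d k (restr k y))
           - scal (y (B (Suc k))) (d k (restr k x)) + brk d k (restr k x) (restr k y)"
proof -
  have i1: "restr k (d k (restr k y)) = d k (restr k y)" by (rule restr_id[OF d_inA[OF k inA_restr]])
  have i2: "restr k (d k (restr k x)) = d k (restr k x)" by (rule restr_id[OF d_inA[OF k inA_restr]])
  have i3: "restr k (brk d k (restr k x) (restr k y)) = brk d k (restr k x) (restr k y)"
    by (rule restr_id[OF brk_inA]) (use k in simp)
  have i4: "restr k (bvec (S (Suc k))) = 0" by simp
  show ?thesis
    by (simp only: brk.simps restr_add restr_diff restr_scal i1 i2 i3 i4 scal_0_right add_0_right)
qed

lemma brk_Suc_top: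
  assumes k: "k < n"
  shows "brk d (Suc k) x y (S (Suc k)) = fk k (d k (restr k x)) (restr k y)"
proof -
  have "d k (restr k y) (S (Suc k)) = 0" "d k (restr k x) (S (Suc k)) = 0"
    using d_inA[OF k inA_restr] unfolding inA_def by auto
  moreover have "brk d k (restr k x) (restr k y) (S (Suc k)) = 0"
    using brk_inA[of k] k unfolding inA_def by auto
  ultimately show ?thesis by simp
qed

lemma brk_inv: "k \<le> n \<Longrightarrow> fk k (brk d k x y) z + fk k y (brk d k x z) = 0"
proof (induction k arbitrary: x y z)
  case 0 then show ?case by simp
next
  case (Suc k)
  have k: "k < n" using Suc by simp
  define rx where "rx = restr k x"
  define ry where "ry = restr k y"
  define rz where "rz = restr k z"
  have ax: "inA k rx" "inA k ry" "inA k rz" by (auto simp: rx_def ry_def rz_def)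
  have e1: "fk (Suc k) (brk d (Suc k) x y) z = z (B (Suc k)) * fk k (d k rx) ry
      + (x (B (Suc k)) * fk k (d k ry) rz - y (B (Suc k)) * fk k (d k rx) rz + fk k (brk d k rx ry) rz)"
    by (simp only: fk.simps brk_B[OF Suc.prems] brk_Suc_top[OF k] brk_Suc_restr[OF k]
        fk_add1 fk_diff1 fk_scal1 rx_def[symmetric] ry_def[symmetric] rz_def[symmetric]) simp
  have e2: "fk (Suc k) y (brk d (Suc k) x z) = y (B (Suc k)) * fk k (d k rx) rz
      + (x (B (Suc k)) * fk k ry (d k rz) - z (B (Suc k)) * fk k ry (d k rx) + fk k ry (brk d k rx rz))"
    by (simp only: fk.simps brk_B[OF Suc.prems] brk_Suc_top[OF k] brk_Suc_restr[OF k]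
        fk_add2 fk_diff2 fk_scal2 rx_def[symmetric] ry_def[symmetric] rz_def[symmetric]) simp
  have s: "fk k (d k ry) rz + fk k ry (d k rz) = 0" using skew[OF k ax(2) ax(3)] .
  have sy: "fk k ry (d k rx) = fk k (d k rx) ry" by (rule fk_sym)
  have ih: "fk k (brk d k rx ry) rz + fk k ry (brk d k rx rz) = 0"
    by (rule Suc.IH) (use Suc.prems in simp)
  have "fk (Suc k) (brk d (Suc k) x y) z + fk (Suc k) y (brk d (Suc k) x z)
     = x (B (Suc k)) * (fk k (d k ry) rz + fk k ry (d k rz))
       + z (B (Suc k)) * (fk k (d k rx) ry - fk k ry (d k rx))
       + (fk k (brk d k rx ry) rz + fk k ry (brk d k rx rz))"
    unfolding e1 e2 by (simp add: algebra_simps)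
  also have "\<dots> = 0" using s sy ih by simp
  finally show ?case .
qed

lemma brk_Suc_inA:
  assumes k: "k < n" and x: "inA k x" and y: "inA k y"
  shows "brk d (Suc k) x y = brk d k x y + scal (fk k (d k x) y) (bvec (S (Suc k)))"
proof -
  have "x (B (Suc k)) = 0" "y (B (Suc k)) = 0" using x y unfolding inA_def by auto
  then show ?thesis by (simp only: brk.simps restr_id[OF x] restr_id[OF y] scal_0_left) simp
qed

lemma brk_stab:
  assumes "m \<le> m'" "m' \<le> n" "inA m x" "inA m y" "l \<le> m"
  shows "brk d m' x y (S l) = brk d m x y (S l)"
  using assms(1,2)
proof (induction m' rule: dec_induct)
  case base then show ?case by simp
next
  case (step q)
  have q: "q < n" using step by simp
  have xq: "inA q x" "inA q y" using assms(3,4) inA_mono step(1) by auto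
  have "brk d (Suc q) x y (S l) = brk d q x y (S l)"
    using step(1) assms(5) by (simp only: brk_Suc_inA[OF q xq] plus_fun_apply scal_apply bvec_SS) simp
  then show ?case using step by simp
qed

lemma brk_top_left:
  assumes k: "k < n" and y: "inA k y"
  shows "brk d (Suc k) (bvec (B (Suc k))) y = d k y"
proof -
  have "y (B (Suc k)) = 0" using y unfolding inA_def by auto
  moreover have "restr k (bvec (B (Suc k))) = (0::'a elt)" by simp
  ultimately show ?thesis using k
    by (simp only: brk.simps restr_id[OF y] d_zero[OF k] brk_zero1 fk_zero1 scal_0_left scal_0_right)
       simp
qed

abbreviation Fd :: "nat \<Rightarrow> nat \<Rightarrow> nat \<Rightarrow> 'a" where
  "Fd p q r \<equiv> fk (r - 1) (d (r - 1) (bvec (B p))) (bvec (B q))"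

lemma Fd_anti: "1 \<le> p \<Longrightarrow> p < r \<Longrightarrow> 1 \<le> q \<Longrightarrow> q < r \<Longrightarrow> r \<le> n \<Longrightarrow> Fd p q r = - Fd q p r"
  by (rule skew_anti) (auto intro: inA_bvecB)

lemma Fd_self: "1 \<le> p \<Longrightarrow> p < r \<Longrightarrow> r \<le> n \<Longrightarrow> Fd p p r = 0"
  by (rule skew_self) (auto intro: inA_bvecB)

lemma Tform:
  assumes ij: "1 \<le> j" "j < i" "i \<le> n" and k: "1 \<le> k" "k \<le> n"
  shows "brk d n (bvec (B i)) (bvec (B j)) (S k) =
    (if k < i then Fd j k i else if k = i then 0 else Fd i j k)"
proof (cases "k \<le> i")
  case True
  have "brk d n (bvec (B i)) (bvec (B j)) (S k) = brk d i (bvec (B i)) (bvec (B j)) (S k)"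
    by (rule brk_stab) (use ij True in \<open>auto intro: inA_bvecB\<close>)
  also have "brk d i (bvec (B i)) (bvec (B j)) = d (i - 1) (bvec (B j))"
  proof -
    have "i = Suc (i - 1)" using ij by simp
    then have "brk d i (bvec (B i)) (bvec (B j)) = brk d (Suc (i - 1)) (bvec (B (Suc (i - 1)))) (bvec (B j))"
      by simp
    also have "\<dots> = d (i - 1) (bvec (B j))"
      by (rule brk_top_left) (use ij in \<open>auto intro: inA_bvecB\<close>)
    finally show ?thesis .
  qed
  finally have e: "brk d n (bvec (B i)) (bvec (B j)) (S k) = d (i - 1) (bvec (B j)) (S k)" .
  show ?thesis
  proof (cases "k < i")
    case True
    then show ?thesis using e k by (simp add: fk_bvecB)
  next
    case False
    then have "k = i" using \<open>k \<le> i\<close> by simp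
    moreover have "inA (i - 1) (d (i - 1) (bvec (B j)))"
      by (rule d_inA) (use ij in \<open>auto intro: inA_bvecB\<close>)
    ultimately show ?thesis using e ij unfolding inA_def by auto
  qed
next
  case False
  have "brk d n (bvec (B i)) (bvec (B j)) (S k) = brk d k (bvec (B i)) (bvec (B j)) (S k)"
    by (rule brk_stab) (use ij k False in \<open>auto intro: inA_bvecB\<close>)
  also have "\<dots> = Fd i j k"
  proof -
    have kk: "k = Suc (k - 1)" "k - 1 < n" using k False ij by auto
    have xi: "inA (k - 1) (bvec (B i))" "inA (k - 1) (bvec (B j))"
      using ij False by (auto intro: inA_bvecB)
    have "brk d k (bvec (B i)) (bvec (B j)) = brk d (Suc (k - 1)) (bvec (B i)) (bvec (B j))"
      using kk by simp
    also have "\<dots> = brk d (k - 1) (bvec (B i)) (bvec (B j)) + scal (Fd i j k) (bvec (S (Suc (k - 1))))"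
      by (rule brk_Suc_inA[OF kk(2) xi])
    finally have "brk d k (bvec (B i)) (bvec (B j)) (S k) =
        brk d (k - 1) (bvec (B i)) (bvec (B j)) (S k) + Fd i j k"
      using kk by simp
    moreover have "brk d (k - 1) (bvec (B i)) (bvec (B j)) (S k) = 0"
      using brk_inA[of "k - 1"] kk unfolding inA_def by auto
    ultimately show ?thesis by simp
  qed
  finally show ?thesis using False by simp
qed

end


lemma scal_add_left: "scal (a + b) u = scal a u + scal b u" by (rule ext) (simp add: algebra_simps)
lemma scal_scal: "scal a (scal b u) = scal (a * b) u" by (rule ext) simp
lemma scal_sum: "scal a (\<Sum>u\<in>F. g u) = (\<Sum>u\<in>F. scal a (g u))"
  by (rule ext) (simp add: sum_fun_apply sum_distrib_left)

definition subsp :: "'a::field elt set \<Rightarrow> bool" where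
  "subsp U \<longleftrightarrow> 0 \<in> U \<and> (\<forall>x\<in>U. \<forall>y\<in>U. x + y \<in> U) \<and> (\<forall>c. \<forall>x\<in>U. scal c x \<in> U)"

lemma subsp_add: "subsp U \<Longrightarrow> x \<in> U \<Longrightarrow> y \<in> U \<Longrightarrow> x + y \<in> U"
  unfolding subsp_def by blast
lemma subsp_scal: "subsp U \<Longrightarrow> x \<in> U \<Longrightarrow> scal c x \<in> U"
  unfolding subsp_def by blast
lemma subsp_0: "subsp U \<Longrightarrow> 0 \<in> U"
  unfolding subsp_def by blast

lemma subsp_sumg:
  assumes U: "subsp U" and fin: "finite I" and g: "\<forall>i\<in>I. g i \<in> U"
  shows "(\<Sum>i\<in>I. scal (c i) (g i)) \<in> U"
  using fin g
proof (induction I rule: finite_induct)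
  case empty show ?case unfolding sum.empty by (rule subsp_0[OF U])
next
  case (insert a F)
  have e: "(\<Sum>i\<in>insert a F. scal (c i) (g i)) = scal (c a) (g a) + (\<Sum>i\<in>F. scal (c i) (g i))"
    by (rule sum.insert[OF insert(1,2)])
  have ga: "g a \<in> U" using insert.prems by simp
  have gF: "\<forall>i\<in>F. g i \<in> U" using insert.prems by simp
  show ?case unfolding e
    by (rule subsp_add[OF U subsp_scal[OF U ga] insert.IH[OF gF]])
qed

lemma subsp_sum:
  assumes "subsp U" "finite F" "F \<subseteq> U"
  shows "(\<Sum>u\<in>F. scal (c u) u) \<in> U"
proof -
  have "\<forall>i\<in>F. i \<in> U" using assms(3) by blast
  then show ?thesis by (rule subsp_sumg[OF assms(1,2)])
qed

lemma lspan_sub: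
  assumes U: "subsp U" and W: "W \<subseteq> U"
  shows "lspan W \<subseteq> U"
proof
  fix v assume "v \<in> lspan W"
  then obtain F c where F: "finite F" "F \<subseteq> W" "v = (\<Sum>u\<in>F. scal (c u) u)"
    unfolding lspan_def by blast
  have "F \<subseteq> U" using F(2) W by blast
  then show "v \<in> U" unfolding F(3) by (rule subsp_sum[OF U F(1)])
qed

lemma lspan_mono:
  assumes W: "W \<subseteq> W'"
  shows "lspan W \<subseteq> lspan W'"
proof
  fix v assume "v \<in> lspan W"
  then obtain F c where F: "finite F" "F \<subseteq> W" "v = (\<Sum>u\<in>F. scal (c u) u)"
    unfolding lspan_def by blast
  have "F \<subseteq> W'" using F(2) W by blast
  then show "v \<in> lspan W'" unfolding lspan_def using F(1,3) by blast
qed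

lemma sum_single: "(\<Sum>u\<in>{w}. f u) = (f w :: 'b::comm_monoid_add)" by simp

lemma lspan_base: "w \<in> W \<Longrightarrow> w \<in> lspan W"
proof -
  assume w: "w \<in> W"
  have e: "w = (\<Sum>u\<in>{w}. scal ((\<lambda>_. 1) u) u)" by (simp only: sum_single scal_1)
  have f: "finite {w}" "{w} \<subseteq> W" using w by auto
  show ?thesis unfolding lspan_def
    by (rule CollectI, rule exI[of _ "{w}"], rule exI[of _ "\<lambda>_. 1"]) (intro conjI f e)
qed

lemma lspan_subsp: "subsp (lspan W)"
proof -
  have z: "0 \<in> lspan W"
    unfolding lspan_def
    by (rule CollectI, rule exI[of _ "{}"], rule exI[of _ "\<lambda>_. 0"])
       (simp only: sum.empty finite.emptyI empty_subsetI simp_thms)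
  have a: "x + y \<in> lspan W" if x: "x \<in> lspan W" and y: "y \<in> lspan W" for x y
  proof -
    obtain F1 c1 where F1: "finite F1" "F1 \<subseteq> W" "x = (\<Sum>u\<in>F1. scal (c1 u) u)"
      using x unfolding lspan_def by blast
    obtain F2 c2 where F2: "finite F2" "F2 \<subseteq> W" "y = (\<Sum>u\<in>F2. scal (c2 u) u)"
      using y unfolding lspan_def by blast
    define c where "c u = (if u \<in> F1 then c1 u else 0) + (if u \<in> F2 then c2 u else 0)" for u
    have fin: "finite (F1 \<union> F2)" using F1 F2 by simp
    have s1: "(\<Sum>u\<in>F1 \<union> F2. scal (if u \<in> F1 then c1 u else 0) u) = (\<Sum>u\<in>F1. scal (c1 u) u)"
    proof -
      have "(\<Sum>u\<in>F1 \<union> F2. scal (if u \<in> F1 then c1 u else 0) u) = (\<Sum>u\<in>F1. scal (if u \<in> F1 then c1 u else 0) u)"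
        by (rule sum.mono_neutral_right[OF fin]) auto
      also have "\<dots> = (\<Sum>u\<in>F1. scal (c1 u) u)" by (rule sum.cong) auto
      finally show ?thesis .
    qed
    have s2: "(\<Sum>u\<in>F1 \<union> F2. scal (if u \<in> F2 then c2 u else 0) u) = (\<Sum>u\<in>F2. scal (c2 u) u)"
    proof -
      have "(\<Sum>u\<in>F1 \<union> F2. scal (if u \<in> F2 then c2 u else 0) u) = (\<Sum>u\<in>F2. scal (if u \<in> F2 then c2 u else 0) u)"
        by (rule sum.mono_neutral_right[OF fin]) auto
      also have "\<dots> = (\<Sum>u\<in>F2. scal (c2 u) u)" by (rule sum.cong) auto
      finally show ?thesis .
    qed
    have "(\<Sum>u\<in>F1 \<union> F2. scal (c u) u) = x + y"
      unfolding c_def scal_add_left sum.distrib s1 s2 F1(3) F2(3) ..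
    then have "x + y = (\<Sum>u\<in>F1 \<union> F2. scal (c u) u)" by (rule sym)
    moreover have "F1 \<union> F2 \<subseteq> W" using F1(2) F2(2) by blast
    ultimately show ?thesis unfolding lspan_def using fin by blast
  qed
  have s: "scal a x \<in> lspan W" if x: "x \<in> lspan W" for a x
  proof -
    obtain F1 c1 where F1: "finite F1" "F1 \<subseteq> W" "x = (\<Sum>u\<in>F1. scal (c1 u) u)"
      using x unfolding lspan_def by blast
    have "scal a x = (\<Sum>u\<in>F1. scal (a * c1 u) u)"
      unfolding F1(3) scal_sum scal_scal ..
    then show ?thesis unfolding lspan_def using F1(1,2)
      by (intro CollectI exI[of _ F1] exI[of _ "\<lambda>u. a * c1 u"]) blast
  qed
  show ?thesis unfolding subsp_def using z a s by blast
qed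

lemma inA_out: "inA k x \<Longrightarrow> m = 0 \<or> k < m \<Longrightarrow> x (B m) = 0 \<and> x (S m) = 0"
  unfolding inA_def by blast

lemma bvec_inj: "bvec s = (bvec t :: 'a::field elt) \<longleftrightarrow> s = t"
proof
  assume h: "bvec s = (bvec t :: 'a elt)"
  have "bvec s s = (bvec t s :: 'a)" using fun_cong[OF h, of s] .
  then show "s = t" by (simp add: bvec_def split: if_splits)
qed simp

lemma lin_indep_bvec:
  assumes "W \<subseteq> range bvec"
  shows "lin_indep (W :: 'a::field elt set)"
  unfolding lin_indep_def
proof (intro allI impI ballI)
  fix F c u
  assume H: "finite F \<and> F \<subseteq> W \<and> (\<Sum>u\<in>F. scal (c u) u) = 0" and u: "u \<in> F"
  obtain t where t: "u = bvec t" using u H assms by blast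
  have h: "(\<Sum>v\<in>F. scal (c v) v) = 0" using H by blast
  have "0 = (\<Sum>v\<in>F. scal (c v) v) t" by (simp only: h zero_fun_apply)
  also have "\<dots> = (\<Sum>v\<in>F. c v * v t)" by (simp add: sum_fun_apply)
  also have "\<dots> = c u * u t + (\<Sum>v\<in>F - {u}. c v * v t)"
    using H u by (simp add: sum.remove)
  also have "(\<Sum>v\<in>F - {u}. c v * v t) = 0"
  proof (rule sum.neutral, rule ballI)
    fix v assume v: "v \<in> F - {u}"
    then obtain s where s: "v = bvec s" using H assms by blast
    then have "s \<noteq> t" using v t by auto
    then show "c v * v t = 0" using s by (simp add: bvec_def)
  qed
  finally show "c u = 0" using t by (simp add: bvec_def)
qed

context chain
begin

abbreviation Bas :: "'a elt set" where
  "Bas \<equiv> (\<lambda>i. bvec (B i) :: 'a elt) ` {1..n} \<union> (\<lambda>i. bvec (S i)) ` {1..n}"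

lemma subsp_inA: "subsp {x. inA k x}"
  unfolding subsp_def by (auto intro: inA_add inA_scal)

lemma subsp_inA2: "subsp {x. inA2 k x}"
  unfolding subsp_def by (auto intro: inA2_add inA2_scal)

lemma decomp:
  assumes x: "inA n x"
  shows "x = (\<Sum>i\<in>{1..n}. scal (x (B i)) (bvec (B i))) + (\<Sum>i\<in>{1..n}. scal (x (S i)) (bvec (S i)))"
proof (rule ext)
  fix t
  show "x t = ((\<Sum>i\<in>{1..n}. scal (x (B i)) (bvec (B i))) + (\<Sum>i\<in>{1..n}. scal (x (S i)) (bvec (S i)))) t"
  proof (cases t)
    case (B m)
    have "(\<Sum>i\<in>{1..n}. x (B i) * (if m = i then 1 else 0)) = (if m \<in> {1..n} then x (B m) else 0)"
      by (simp add: if_distrib[of "\<lambda>z. x (B _) * z"] cong: if_cong)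
    then show ?thesis using B inA_out[OF x, of m] by (auto simp: sum_fun_apply)
  next
    case (S m)
    have "(\<Sum>i\<in>{1..n}. x (S i) * (if m = i then 1 else 0)) = (if m \<in> {1..n} then x (S m) else 0)"
      by (simp add: if_distrib[of "\<lambda>z. x (S _) * z"] cong: if_cong)
    then show ?thesis using S inA_out[OF x, of m] by (auto simp: sum_fun_apply)
  qed
qed

lemma inA_in_subsp:
  assumes U: "subsp U" and bas: "Bas \<subseteq> U" and x: "inA n x"
  shows "x \<in> U"
proof -
  have 1: "(\<Sum>i\<in>{1..n}. scal (x (B i)) (bvec (B i))) \<in> U"
    by (rule subsp_sumg[OF U]) (use bas in auto)
  have 2: "(\<Sum>i\<in>{1..n}. scal (x (S i)) (bvec (S i))) \<in> U"
    by (rule subsp_sumg[OF U]) (use bas in auto)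
  have "x = (\<Sum>i\<in>{1..n}. scal (x (B i)) (bvec (B i))) + (\<Sum>i\<in>{1..n}. scal (x (S i)) (bvec (S i)))"
    by (rule decomp[OF x])
  also have "\<dots> \<in> U" using 1 2 U unfolding subsp_def by blast
  finally show ?thesis .
qed

lemma Bas_inA: "Bas \<subseteq> {x. inA n x}"
  by (auto intro: inA_bvecB inA_bvecS)

lemma lspan_Bas: "lspan Bas = {x. inA n x}"
proof
  show "lspan Bas \<subseteq> {x. inA n x}" by (rule lspan_sub[OF subsp_inA Bas_inA])
  show "{x. inA n x} \<subseteq> lspan Bas"
  proof
    fix x :: "'a elt" assume "x \<in> {x. inA n x}"
    then show "x \<in> lspan Bas"
      by (intro inA_in_subsp[OF lspan_subsp]) (auto intro: lspan_base)
  qed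
qed

lemma lin_indep_Bas: "lin_indep Bas"
  by (rule lin_indep_bvec) auto

lemma card_Bas: "card Bas = 2 * n"
proof -
  have i1: "inj_on (\<lambda>i. bvec (B i) :: 'a elt) {1..n}" by (auto intro: inj_onI simp: bvec_inj)
  have i2: "inj_on (\<lambda>i. bvec (S i) :: 'a elt) {1..n}" by (auto intro: inj_onI simp: bvec_inj)
  have dj: "(\<lambda>i. bvec (B i) :: 'a elt) ` {1..n} \<inter> (\<lambda>i. bvec (S i)) ` {1..n} = {}"
    by (auto simp: bvec_inj)
  have "card Bas = card ((\<lambda>i. bvec (B i) :: 'a elt) ` {1..n}) + card ((\<lambda>i. bvec (S i) :: 'a elt) ` {1..n})"
    by (rule card_Un_disjoint) (use dj in auto)
  also have "\<dots> = n + n" using card_image[OF i1] card_image[OF i2] by simp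
  finally show ?thesis by simp
qed

lemma Dc_perm:
  assumes "p < q" "q < r"
  shows "Dc d p q r = Fd p q r" "Dc d q p r = - Fd p q r" "Dc d p r q = - Fd p q r"
    "Dc d r p q = Fd p q r" "Dc d q r p = Fd p q r" "Dc d r q p = - Fd p q r"
  using assms by (simp_all add: Dc_def Let_def min_def max_def)

lemma Dc_diag: "i = j \<or> j = k \<or> i = k \<Longrightarrow> Dc d i j k = 0"
  by (simp add: Dc_def)

lemma Tcoord:
  assumes i: "1 \<le> i" "i \<le> n" and j: "1 \<le> j" "j \<le> n" and k: "1 \<le> k" "k \<le> n"
  shows "brk d n (bvec (B i)) (bvec (B j)) (S k) = Dc d i j k"
proof -
  consider "i = j" | "j < i" | "i < j" by linarith
  then show ?thesis
  proof cases
    case 1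
    then show ?thesis by (simp add: brk_alt Dc_diag)
  next
    case 2
    note T = Tform[OF j(1) 2 i(2) k]
    consider "k < j" | "k = j" | "j < k" "k < i" | "k = i" | "i < k" by linarith
    then show ?thesis
    proof cases
      case 1 then show ?thesis using T Dc_perm(6)[of k j i] Fd_anti[of j i k] i j k 2 by simp
    next
      case 2 then show ?thesis using T Fd_self[of j i] Dc_diag i j k \<open>j < i\<close> by simp
    next
      case 3 then show ?thesis using T Dc_perm(4)[of j k i] by simp
    next
      case 4 then show ?thesis using T Dc_diag by simp
    next
      case 5 then show ?thesis using T Dc_perm(2)[of j i k] Fd_anti[of i k j] i j k \<open>j < i\<close> by simp
    qed
  next
    case 3
    have T0: "brk d n (bvec (B i)) (bvec (B j)) (S k) = - brk d n (bvec (B j)) (bvec (B i)) (S k)"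
      by (subst brk_anti) simp_all
    note T = T0 Tform[OF i(1) 3 j(2) k]
    consider "k < i" | "k = i" | "i < k" "k < j" | "k = j" | "j < k" by linarith
    then show ?thesis
    proof cases
      case 1 then show ?thesis using T Dc_perm(5)[of k i j] Fd_anti[of i j k] i j k 3 by simp
    next
      case 2 then show ?thesis using T Fd_self[of i j] Dc_diag i j k \<open>i < j\<close> by simp
    next
      case 3 then show ?thesis using T Dc_perm(3)[of i k j] by simp
    next
      case 4 then show ?thesis using T Dc_diag by simp
    next
      case 5 then show ?thesis using T Dc_perm(1)[of i j k] Fd_anti[of j k i] i j k \<open>i < j\<close> by simp
    qed
  qed
qed

lemma brk_formula:
  assumes i: "1 \<le> i" "i \<le> n" and j: "1 \<le> j" "j \<le> n"
  shows "brk d n (bvec (B i)) (bvec (B j)) = (\<Sum>k=1..n. scal (Dc d i j k) (bvec (S k)))"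
proof (rule ext)
  fix t
  show "brk d n (bvec (B i)) (bvec (B j)) t = (\<Sum>k=1..n. scal (Dc d i j k) (bvec (S k))) t"
  proof (cases t)
    case (B m)
    then show ?thesis by (simp add: sum_fun_apply)
  next
    case (S m)
    have "(\<Sum>k=1..n. scal (Dc d i j k) (bvec (S k))) (S m) = (\<Sum>k=1..n. Dc d i j k * (if m = k then 1 else 0))"
      by (simp add: sum_fun_apply)
    also have "\<dots> = (if m \<in> {1..n} then Dc d i j m else 0)"
      by (simp add: if_distrib[of "\<lambda>z. Dc d i j _ * z"] cong: if_cong)
    finally have R: "(\<Sum>k=1..n. scal (Dc d i j k) (bvec (S k))) (S m) = (if m \<in> {1..n} then Dc d i j m else 0)" .
    show ?thesis
    proof (cases "m \<in> {1..n}")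
      case True
      then show ?thesis using R S Tcoord[OF i j, of m] by simp
    next
      case False
      then have "brk d n (bvec (B i)) (bvec (B j)) (S m) = 0"
        using inA_out[OF brk_inA[OF order_refl], of m] by auto
      then show ?thesis using R S False by auto
    qed
  qed
qed

end


context chain
begin

lemma inA_out':
  assumes "inA k x" "\<not> (1 \<le> m \<and> m \<le> k)"
  shows "x (B m) = 0 \<and> x (S m) = 0"
proof -
  have "m = 0 \<or> k < m" using assms(2) by auto
  then show ?thesis by (rule inA_out[OF assms(1)])
qed

lemma d1_zero:
  assumes n1: "1 < n" and x: "inA 1 x"
  shows "d 1 x = 0"
proof -
  have k: "(1::nat) < n" by (rule n1)
  have xe: "x = scal (x (B 1)) (bvec (B 1)) + scal (x (S 1)) (bvec (S 1))"
  proof (rule ext)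
    fix t show "x t = (scal (x (B 1)) (bvec (B 1)) + scal (x (S 1)) (bvec (S 1))) t"
    proof (cases t)
      case (B m) show ?thesis
      proof (cases "m = 1")
        case True then show ?thesis using B by simp
      next
        case False then have "\<not> (1 \<le> m \<and> m \<le> 1)" by linarith
        then show ?thesis using B False inA_out'[OF x, of m] by simp
      qed
    next
      case (S m) show ?thesis
      proof (cases "m = 1")
        case True then show ?thesis using S by simp
      next
        case False then have "\<not> (1 \<le> m \<and> m \<le> 1)" by linarith
        then show ?thesis using S False inA_out'[OF x, of m] by simp
      qed
    qed
  qed
  have iB: "inA 1 (bvec (B 1))" by (rule inA_bvecB) auto
  have iS: "inA 1 (bvec (S 1))" by (rule inA_bvecS) auto
  have dS: "d 1 (bvec (S 1)) = 0" by (rule d_ker[OF k]) (rule inA2_bvecS, auto)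
  have A2: "inA2 1 (d 1 (bvec (B 1)))" by (rule d_A2[OF k iB])
  have c0: "d 1 (bvec (B 1)) (S 1) = 0"
    using skew_self[OF k iB] fk_bvecB[of 1 1 "d 1 (bvec (B 1))"] by simp
  have dB: "d 1 (bvec (B 1)) = 0"
  proof (rule ext)
    fix t show "d 1 (bvec (B 1)) t = 0 t"
    proof (cases t)
      case (B m) then show ?thesis using A2 unfolding inA2_def by simp
    next
      case (S m) show ?thesis
      proof (cases "m = 1")
        case True then show ?thesis using S c0 by simp
      next
        case False then have "\<not> (1 \<le> m \<and> m \<le> 1)" by linarith
        then show ?thesis using S inA_out'[OF d_inA[OF k iB], of m] by simp
      qed
    qed
  qed
  have "d 1 x = d 1 (scal (x (B 1)) (bvec (B 1))) + d 1 (scal (x (S 1)) (bvec (S 1)))"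
    by (subst xe, rule lin_add[OF k inA_scal[OF iB] inA_scal[OF iS]])
  also have "\<dots> = scal (x (B 1)) (d 1 (bvec (B 1))) + scal (x (S 1)) (d 1 (bvec (S 1)))"
    by (simp only: lin_scal[OF k iB] lin_scal[OF k iS])
  also have "\<dots> = 0" by (simp only: dB dS scal_0_right add_0_right)
  finally show ?thesis .
qed

lemma three_le_n: "3 \<le> n"
proof -
  obtain k x where kx: "k < n" "inA k x" "d k x \<noteq> 0" using NNP by blast
  have "k \<noteq> 0"
  proof
    assume "k = 0"
    then have "x = 0" using kx inA_0_zero by blast
    then show False using kx \<open>k = 0\<close> by simp
  qed
  moreover have "k \<noteq> 1"
  proof
    assume "k = 1"
    then show False using d1_zero kx by auto
  qed
  ultimately show ?thesis using kx by linarith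
qed

lemma nonzero_brk: "\<exists>x y. inA n x \<and> inA n y \<and> brk d n x y \<noteq> 0"
proof -
  obtain k x where kx: "k < n" "inA k x" "d k x \<noteq> 0" using NNP by blast
  obtain t where t: "d k x t \<noteq> 0" using kx(3) by (auto simp: fun_eq_iff)
  have A2: "inA2 k (d k x)" by (rule d_A2[OF kx(1,2)])
  obtain l where l: "t = S l" "1 \<le> l" "l \<le> k"
  proof (cases t)
    case (B m) then show ?thesis using t A2 unfolding inA2_def by simp
  next
    case (S m)
    have h: "\<not> (m = 0 \<or> k < m)"
    proof
      assume "m = 0 \<or> k < m"
      then have "d k x (S m) = 0" using inA_out[OF d_inA[OF kx(1,2)]] by blast
      then show False using t S by simp
    qed
    have "m \<noteq> 0" "\<not> k < m" using h by simp_all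
    then have "1 \<le> m" "m \<le> k" by linarith+
    then show ?thesis using that[of m] S by blast
  qed
  have e1: "inA (Suc k) (bvec (B (Suc k)))" by (rule inA_bvecB) auto
  have e2: "inA (Suc k) x" by (rule inA_mono[OF kx(2)]) simp
  have "brk d n (bvec (B (Suc k))) x (S l) = brk d (Suc k) (bvec (B (Suc k))) x (S l)"
    by (rule brk_stab) (use kx l e1 e2 in auto)
  also have "\<dots> = d k x (S l)" by (simp only: brk_top_left[OF kx(1,2)])
  finally have "brk d n (bvec (B (Suc k))) x (S l) \<noteq> 0" using t l by simp
  then have "brk d n (bvec (B (Suc k))) x \<noteq> 0" by auto
  moreover have "inA n (bvec (B (Suc k)))" by (rule inA_bvecB) (use kx in auto)
  moreover have "inA n x" by (rule inA_mono[OF kx(2)]) (use kx in simp)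
  ultimately show ?thesis by blast
qed

lemma fk_nondeg:
  assumes x: "inA n x" and h: "\<forall>y\<in>{x. inA n x}. fk n x y = 0"
  shows "x = 0"
proof (rule ext)
  fix t show "x t = 0 t"
  proof (cases t)
    case (B m)
    show ?thesis
    proof (cases "1 \<le> m \<and> m \<le> n")
      case True
      have "inA n (bvec (S m))" by (rule inA_bvecS) (use True in auto)
      then have "fk n x (bvec (S m)) = 0" using h by blast
      then show ?thesis using B True fk_bvecS[of m n x] by simp
    next
      case False then show ?thesis using B inA_out[OF x, of m] by auto
    qed
  next
    case (S m)
    show ?thesis
    proof (cases "1 \<le> m \<and> m \<le> n")
      case True
      have "inA n (bvec (B m))" by (rule inA_bvecB) (use True in auto)
      then have "fk n x (bvec (B m)) = 0" using h by blast
      then show ?thesis using S True fk_bvecB[of m n x] by simp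
    next
      case False then show ?thesis using S inA_out[OF x, of m] by auto
    qed
  qed
qed

lemma quad: "quadratic_lie_algebra_on {x. inA n x} (brk d n) (fk n)"
proof -
  have jac: "brk d n x (brk d n y z) = 0" for x y z
    using brk_A2_arg[OF order_refl brk_A2[OF order_refl]] by blast
  have lie: "lie_algebra_on {x. inA n x} (brk d n)"
    unfolding lie_algebra_on_def
    using brk_inA[OF order_refl] brk_add1[OF order_refl] brk_scal1[OF order_refl] brk_alt[OF order_refl]
    by (auto simp: jac intro: inA_add inA_scal)
  show ?thesis
    unfolding quadratic_lie_algebra_on_def
    using lie fk_add1 fk_scal1 fk_sym fk_nondeg brk_inv[OF order_refl] by blast
qed

lemma A2_central: "inA2 n z \<Longrightarrow> brk d n z x = 0"
  using brk_A2_arg[OF order_refl] by blast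

lemma memG:
  assumes "w \<in> {(\<Sum>k=1..n. scal (Dc d i j k) (bvec (S k))) | i j. 1 \<le> j \<and> j < i \<and> i \<le> n}"
  obtains i j where "w = brk d n (bvec (B i)) (bvec (B j))" "1 \<le> j" "j < i" "i \<le> n"
proof -
  obtain i j where ij: "w = (\<Sum>k=1..n. scal (Dc d i j k) (bvec (S k)))" "1 \<le> j" "j < i" "i \<le> n"
    using assms by blast
  have eq: "brk d n (bvec (B i)) (bvec (B j)) = (\<Sum>k=1..n. scal (Dc d i j k) (bvec (S k)))"
    by (rule brk_formula) (use ij in auto)
  have "w = brk d n (bvec (B i)) (bvec (B j))" by (simp only: ij(1) eq)
  then show ?thesis using that ij(2-4) by blast
qed

lemma inG:
  assumes "1 \<le> j" "j < i" "i \<le> n"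
  shows "brk d n (bvec (B i)) (bvec (B j)) \<in> {(\<Sum>k=1..n. scal (Dc d i j k) (bvec (S k))) | i j. 1 \<le> j \<and> j < i \<and> i \<le> n}"
proof -
  have "brk d n (bvec (B i)) (bvec (B j)) = (\<Sum>k=1..n. scal (Dc d i j k) (bvec (S k)))"
    by (rule brk_formula) (use assms in auto)
  then show ?thesis using assms by blast
qed

lemma reduced_iff:
  "({z. inA n z \<and> (\<forall>x. inA n x \<longrightarrow> brk d n z x = 0)} \<subseteq> lspan {brk d n x y | x y. inA n x \<and> inA n y}
    \<longleftrightarrow> {x. inA2 n x} = lspan {(\<Sum>k=1..n. scal (Dc d i j k) (bvec (S k))) | i j. 1 \<le> j \<and> j < i \<and> i \<le> n})"
proof -
  define G where "G = {(\<Sum>k=1..n. scal (Dc d i j k) (bvec (S k))) | i j. 1 \<le> j \<and> j < i \<and> i \<le> n}"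
  define Br where "Br = {brk d n x y | x y. inA n x \<and> inA n y}"
  define Z where "Z = {z. inA n z \<and> (\<forall>x. inA n x \<longrightarrow> brk d n z x = 0)}"
  have GBr: "G \<subseteq> Br"
  proof
    fix w assume "w \<in> G"
    then obtain i j where w: "w = brk d n (bvec (B i)) (bvec (B j))" "1 \<le> j" "j < i" "i \<le> n"
      unfolding G_def by (rule memG)
    have "inA n (bvec (B i))" "inA n (bvec (B j))" using w by (auto intro!: inA_bvecB)
    then show "w \<in> Br" unfolding Br_def w(1) by blast
  qed
  have GA2: "lspan G \<subseteq> {x. inA2 n x}"
  proof (rule lspan_sub[OF subsp_inA2], rule subsetI)
    fix w assume "w \<in> G"
    then obtain i j where w: "w = brk d n (bvec (B i)) (bvec (B j))" "1 \<le> j" "j < i" "i \<le> n"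
      unfolding G_def by (rule memG)
    show "w \<in> {x. inA2 n x}" unfolding w(1) using brk_A2[OF order_refl] by blast
  qed
  have A2Z: "{x. inA2 n x} \<subseteq> Z"
    unfolding Z_def using A2_central by (auto simp: inA2_def)
  have BrG: "Br \<subseteq> lspan G"
  proof
    fix v assume "v \<in> Br"
    then obtain x y where v: "v = brk d n x y" and x: "inA n x" and y: "inA n y"
      unfolding Br_def by blast
    have P: "subsp (lspan G)" by (rule lspan_subsp)
    have basic: "brk d n (bvec (B i)) (bvec (B j)) \<in> lspan G" if "1 \<le> i" "i \<le> n" "1 \<le> j" "j \<le> n" for i j
    proof -
      consider "i = j" | "j < i" | "i < j" by linarith
      then show ?thesis
      proof cases
        case 1 then show ?thesis using brk_alt[OF order_refl] subsp_0[OF P] by simp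
      next
        case 2
        then have "brk d n (bvec (B i)) (bvec (B j)) \<in> G" unfolding G_def using that by (intro inG) auto
        then show ?thesis by (rule lspan_base)
      next
        case 3
        then have "brk d n (bvec (B j)) (bvec (B i)) \<in> G" unfolding G_def using that by (intro inG) auto
        then have "scal (-1) (brk d n (bvec (B j)) (bvec (B i))) \<in> lspan G"
          by (rule subsp_scal[OF P lspan_base])
        moreover have "scal (-1) (brk d n (bvec (B j)) (bvec (B i))) = brk d n (bvec (B i)) (bvec (B j))"
          by (subst brk_anti[OF order_refl, of "bvec (B i)"]) (rule ext, simp)
        ultimately show ?thesis by simp
      qed
    qed
    have inner: "brk d n (bvec (B i)) w \<in> lspan G" if i: "1 \<le> i" "i \<le> n" and w: "inA n w" for i w
    proof -
      define U where "U = {w. brk d n (bvec (B i)) w \<in> lspan G}"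
      have U: "subsp U" unfolding subsp_def U_def
        using subsp_0[OF P] subsp_add[OF P] subsp_scal[OF P]
        by (simp add: brk_add2[OF order_refl] brk_scal2[OF order_refl])
      have "Bas \<subseteq> U"
      proof
        fix u assume "u \<in> Bas"
        then consider j where "u = bvec (B j)" "1 \<le> j" "j \<le> n" | j where "u = bvec (S j)" "1 \<le> j" "j \<le> n"
          by auto
        then show "u \<in> U"
        proof cases
          case 1 then show ?thesis unfolding U_def using basic i by simp
        next
          case 2
          have "inA2 n (bvec (S j))" using 2 by (intro inA2_bvecS) auto
          then have "brk d n (bvec (B i)) (bvec (S j)) = 0" using brk_A2_arg[OF order_refl] by blast
          then show ?thesis unfolding U_def using 2 subsp_0[OF P] by simp
        qed
      qed
      then have "w \<in> U" by (rule inA_in_subsp[OF U _ w])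
      then show ?thesis unfolding U_def by simp
    qed
    define U where "U = {x. brk d n x y \<in> lspan G}"
    have U: "subsp U" unfolding subsp_def U_def
      using subsp_0[OF P] subsp_add[OF P] subsp_scal[OF P]
      by (simp add: brk_add1[OF order_refl] brk_scal1[OF order_refl])
    have "Bas \<subseteq> U"
    proof
      fix u assume "u \<in> Bas"
      then consider j where "u = bvec (B j)" "1 \<le> j" "j \<le> n" | j where "u = bvec (S j)" "1 \<le> j" "j \<le> n"
        by auto
      then show "u \<in> U"
      proof cases
        case 1 then show ?thesis unfolding U_def using inner y by simp
      next
        case 2
        have "inA2 n (bvec (S j))" using 2 by (intro inA2_bvecS) auto
        then have "brk d n (bvec (S j)) y = 0" using brk_A2_arg[OF order_refl] by blast
        then show ?thesis unfolding U_def using 2 subsp_0[OF P] by simp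
      qed
    qed
    then have "x \<in> U" by (rule inA_in_subsp[OF U _ x])
    then show "v \<in> lspan G" unfolding U_def v by simp
  qed
  have "Z \<subseteq> lspan Br \<longleftrightarrow> {x. inA2 n x} = lspan G"
  proof
    assume H: "Z \<subseteq> lspan Br"
    have "lspan Br \<subseteq> lspan G" by (rule lspan_sub[OF lspan_subsp BrG])
    then show "{x. inA2 n x} = lspan G" using H A2Z GA2 by blast
  next
    assume H: "{x. inA2 n x} = lspan G"
    show "Z \<subseteq> lspan Br"
    proof
      fix z assume z: "z \<in> Z"
      then have zA: "inA n z" and zc: "\<And>x. inA n x \<Longrightarrow> brk d n z x = 0" unfolding Z_def by auto
      define U where "U = {w. fk n z w = 0}"
      have U: "subsp U" unfolding subsp_def U_def by (simp add: fk_add2 fk_scal2)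
      have GU: "G \<subseteq> U"
      proof
        fix w assume "w \<in> G"
        then obtain i j where w: "w = brk d n (bvec (B i)) (bvec (B j))" and ij: "1 \<le> j" "j < i" "i \<le> n"
          unfolding G_def by (rule memG)
        have ia: "inA n (bvec (B i))" using ij by (intro inA_bvecB) auto
        have "brk d n (bvec (B i)) z = - brk d n z (bvec (B i))" by (rule brk_anti[OF order_refl])
        also have "\<dots> = 0" using zc[OF ia] by simp
        finally have bz: "brk d n (bvec (B i)) z = 0" .
        have "fk n z w = fk n w z" by (rule fk_sym)
        also have "\<dots> = - fk n (bvec (B j)) (brk d n (bvec (B i)) z)"
          using brk_inv[OF order_refl, of "bvec (B i)" "bvec (B j)" z] unfolding w
          by (simp add: eq_neg_iff_add_eq_0)
        also have "\<dots> = 0" unfolding bz by simp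
        finally show "w \<in> U" unfolding U_def by simp
      qed
      have zB: "z (B m) = 0" for m
      proof (cases "1 \<le> m \<and> m \<le> n")
        case True
        have "bvec (S m) \<in> {x. inA2 n x}" using True by (auto intro: inA2_bvecS)
        then have "bvec (S m) \<in> lspan G" using H by metis
        then have "bvec (S m) \<in> U" using lspan_sub[OF U GU] by blast
        then have "fk n z (bvec (S m)) = 0" unfolding U_def by simp
        then show ?thesis using fk_bvecS[of m n z] True by simp
      next
        case False then show ?thesis using inA_out[OF zA, of m] by auto
      qed
      have "z \<in> {x. inA2 n x}" using zA zB by (simp add: inA2_def)
      then have "z \<in> lspan G" using H by metis
      then show "z \<in> lspan Br" using lspan_mono[OF GBr] by blast
    qed
  qed
  then show ?thesis unfolding Z_def Br_def G_def .
qed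

end

theorem lemma2p13:
  fixes d :: "nat \<Rightarrow> 'a::field_char_0 elt \<Rightarrow> 'a elt" and n :: nat
  assumes maps: "\<And>k x. k < n \<Longrightarrow> inA k x \<Longrightarrow> inA k (d k x)"
    and lin_add: "\<And>k x y. k < n \<Longrightarrow> inA k x \<Longrightarrow> inA k y \<Longrightarrow> d k (x + y) = d k x + d k y"
    and lin_scal: "\<And>k c x. k < n \<Longrightarrow> inA k x \<Longrightarrow> d k (scal c x) = scal c (d k x)"
    and deriv: "\<And>k x y. k < n \<Longrightarrow> inA k x \<Longrightarrow> inA k y \<Longrightarrow>
                   d k (brk d k x y) = brk d k (d k x) y + brk d k x (d k y)"
    and skew: "\<And>k x y. k < n \<Longrightarrow> inA k x \<Longrightarrow> inA k y \<Longrightarrow>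
                   fk k (d k x) y + fk k x (d k y) = 0"
    and NNP: "\<exists>k<n. \<exists>x. inA k x \<and> d k x \<noteq> 0"
    and SP2_im: "\<And>k x. 1 \<le> k \<Longrightarrow> k < n \<Longrightarrow> inA k x \<Longrightarrow> inA2 k (d k x)"
    and SP2_ker: "\<And>k x. 1 \<le> k \<Longrightarrow> k < n \<Longrightarrow> inA2 k x \<Longrightarrow> d k x = 0"
  shows "3 \<le> n
    \<and> (quadratic_lie_algebra_on {x. inA n x} (brk d n) (fk n)
       \<and> lspan ((\<lambda>i. bvec (B i) :: 'a elt) ` {1..n} \<union> (\<lambda>i. bvec (S i)) ` {1..n}) = {x. inA n x}
       \<and> lin_indep ((\<lambda>i. bvec (B i) :: 'a elt) ` {1..n} \<union> (\<lambda>i. bvec (S i)) ` {1..n})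
       \<and> card ((\<lambda>i. bvec (B i) :: 'a elt) ` {1..n} \<union> (\<lambda>i. bvec (S i)) ` {1..n}) = 2 * n
       \<and> (\<forall>x y z. inA n x \<and> inA n y \<and> inA n z \<longrightarrow> brk d n x (brk d n y z) = 0)
       \<and> (\<exists>x y. inA n x \<and> inA n y \<and> brk d n x y \<noteq> 0)
       \<and> (\<forall>z. inA2 n z \<longrightarrow> (\<forall>x. inA n x \<longrightarrow> brk d n z x = 0))
       \<and> (\<forall>i\<in>{1..n}. \<forall>j\<in>{1..n}.
            brk d n (bvec (B i)) (bvec (B j)) = (\<Sum>k=1..n. scal (Dc d i j k) (bvec (S k))))
       \<and> (\<forall>i\<in>{1..n}. \<forall>x. inA n x \<longrightarrow> brk d n (bvec (S i)) x = 0)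
       \<and> (\<forall>i\<in>{1..n}. \<forall>j\<in>{1..n}.
            fk n (bvec (B i)) (bvec (S j)) = (if i = j then 1 else 0)
          \<and> fk n (bvec (B i)) (bvec (B j)) = 0
          \<and> fk n (bvec (S i)) (bvec (S j)) = 0))
    \<and> ({z. inA n z \<and> (\<forall>x. inA n x \<longrightarrow> brk d n z x = 0)}
          \<subseteq> lspan {brk d n x y | x y. inA n x \<and> inA n y}
       \<longleftrightarrow> {x. inA2 n x} =
           lspan {(\<Sum>k=1..n. scal (Dc d i j k) (bvec (S k))) | i j. 1 \<le> j \<and> j < i \<and> i \<le> n})"
proof -
  interpret chain d n
    by unfold_locales (fact maps lin_add lin_scal deriv skew NNP SP2_im SP2_ker)+
  have twostep: "\<forall>x y z. inA n x \<and> inA n y \<and> inA n z \<longrightarrow> brk d n x (brk d n y z) = 0"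
    using brk_A2_arg[OF order_refl brk_A2[OF order_refl]] by blast
  have cent: "\<forall>z. inA2 n z \<longrightarrow> (\<forall>x. inA n x \<longrightarrow> brk d n z x = 0)"
    using A2_central by blast
  have form: "\<forall>i\<in>{1..n}. \<forall>j\<in>{1..n}.
            brk d n (bvec (B i)) (bvec (B j)) = (\<Sum>k=1..n. scal (Dc d i j k) (bvec (S k)))"
  proof (intro ballI)
    fix i j assume "i \<in> {1..n}" "j \<in> {1..n}"
    then show "brk d n (bvec (B i)) (bvec (B j)) = (\<Sum>k=1..n. scal (Dc d i j k) (bvec (S k)))"
      by (intro brk_formula) auto
  qed
  have sc: "\<forall>i\<in>{1..n}. \<forall>x. inA n x \<longrightarrow> brk d n (bvec (S i)) x = 0"
  proof (intro ballI allI impI)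
    fix i and x :: "'a elt" assume "i \<in> {1..n}" "inA n x"
    then have "inA2 n (bvec (S i))" by (intro inA2_bvecS) auto
    then show "brk d n (bvec (S i)) x = 0" by (rule A2_central)
  qed
  have fv: "\<forall>i\<in>{1..n}. \<forall>j\<in>{1..n}.
            fk n (bvec (B i)) (bvec (S j)) = (if i = j then 1 else 0)
          \<and> fk n (bvec (B i)) (bvec (B j)) = 0
          \<and> fk n (bvec (S i)) (bvec (S j)) = 0"
  proof (intro ballI)
    fix i j assume i: "i \<in> {1..n}" and j: "j \<in> {1..n}"
    then show "fk n (bvec (B i)) (bvec (S j)) = (if i = j then 1 else 0)
          \<and> fk n (bvec (B i)) (bvec (B j)) = 0
          \<and> fk n (bvec (S i)) (bvec (S j)) = 0"
      by (simp add: fk_bvecS fk_bvecB)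
  qed
  show ?thesis
    using three_le_n quad lspan_Bas lin_indep_Bas card_Bas twostep nonzero_brk cent form sc fv reduced_iff
    by blast
qed

end
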